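(* Let $R$, $G$, $*$, $\sigma$ and $\mathcal{S}$ be as in the context, and suppose $\mathcal{S}$ is anticommutative. If $*$ is not the identity map on $G$, then: - $\operatorname{char}(R)=4$; - for every $x\in G\setminus G_*$ we have $xx^*=x^*x$ and $x^2\in G_*$.
   Context: Throughout, $R$ is a commutative ring with unity with $\operatorname{char}(R)\neq 2$, and $\mathcal{U}(R)$ is its unit group. $G$ is a group with an involution $*$, i.e. a map $x\mapsto x^*$ with $(xy)^*=y^*x^*$ and $(x^* )^*=x$. The map $\sigma:G\to\mathcal{U}(R)$ is a nontrivial group homomorphism with kernel $N=\ker\sigma$, and it is compatible with $*$: $xx^*\in N$ for all $x\in G$. The group ring $RG$ carries the involution $\left(\sum_{x\in G}\alpha_x x\right)^{\sigma*}=\sum_{x\in G}\sigma(x)\alpha_x x^*$. Write $G_*=\{x\in G: x^*=x\}$ and $N_*=G_*\cap N$. Let $\mathcal{S}$ be the $R$-submodule of $RG$ spanned by the union of the following three sets: - $2\mathcal{S}_1=\{2x: x\in N_*\}$; - $\mathcal{S}_2=\{\alpha x: x\in G_*\setminus N,\ \alpha\in R,\ \alpha(1-\sigma(x))=0\}$; - $\mathcal{S}_3=\{x+\sigma(x)x^*: x\in G\setminus G_*\}$. $\mathcal{S}$ is called anticommutative if $ab+ba=0$ for all $a,b\in\mathcal{S}$. *)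

theory Defs
  imports "HOL-Algebra.Group"
begin

text \<open>Group ring RG over a commutative ring 'r (type class) and a group G (HOL-Algebra).
Elements of RG are finitely supported functions from the carrier of G to 'r,
vanishing outside the carrier.\<close>

definition grelem :: "('g, 'b) monoid_scheme \<Rightarrow> ('g \<Rightarrow> 'r::comm_ring_1) \<Rightarrow> bool" where
  "grelem G a \<longleftrightarrow> finite {z. a z \<noteq> 0} \<and> (\<forall>z. z \<notin> carrier G \<longrightarrow> a z = 0)"

definition grbasis :: "('g, 'b) monoid_scheme \<Rightarrow> 'g \<Rightarrow> ('g \<Rightarrow> 'r::comm_ring_1)" where
  "grbasis G x = (\<lambda>z. if z = x then 1 else 0)"

definition grmult :: "('g, 'b) monoid_scheme \<Rightarrow> ('g \<Rightarrow> 'r::comm_ring_1) \<Rightarrow> ('g \<Rightarrow> 'r) \<Rightarrow> ('g \<Rightarrow> 'r)" where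
  "grmult G a b = (\<lambda>z. if z \<in> carrier G
      then (\<Sum>x\<in>{x \<in> carrier G. a x \<noteq> 0}. a x * b (inv\<^bsub>G\<^esub> x \<otimes>\<^bsub>G\<^esub> z)) else 0)"

definition group_involution :: "('g, 'b) monoid_scheme \<Rightarrow> ('g \<Rightarrow> 'g) \<Rightarrow> bool" where
  "group_involution G s \<longleftrightarrow> (\<forall>x\<in>carrier G. s x \<in> carrier G \<and> s (s x) = x) \<and>
     (\<forall>x\<in>carrier G. \<forall>y\<in>carrier G. s (x \<otimes>\<^bsub>G\<^esub> y) = s y \<otimes>\<^bsub>G\<^esub> s x)"

definition Gstar :: "('g, 'b) monoid_scheme \<Rightarrow> ('g \<Rightarrow> 'g) \<Rightarrow> 'g set" where
  "Gstar G s = {x \<in> carrier G. s x = x}"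

definition kerN :: "('g, 'b) monoid_scheme \<Rightarrow> ('g \<Rightarrow> 'r::comm_ring_1) \<Rightarrow> 'g set" where
  "kerN G \<sigma> = {x \<in> carrier G. \<sigma> x = 1}"

definition Sgens :: "('g, 'b) monoid_scheme \<Rightarrow> ('g \<Rightarrow> 'g) \<Rightarrow> ('g \<Rightarrow> 'r::comm_ring_1) \<Rightarrow> ('g \<Rightarrow> 'r) set" where
  "Sgens G s \<sigma> =
     {(\<lambda>z. 2 * grbasis G x z) | x. x \<in> Gstar G s \<inter> kerN G \<sigma>}
   \<union> {(\<lambda>z. \<alpha> * grbasis G x z) | x \<alpha>. x \<in> Gstar G s - kerN G \<sigma> \<and> \<alpha> * (1 - \<sigma> x) = 0}
   \<union> {(\<lambda>z. grbasis G x z + \<sigma> x * grbasis G (s x) z) | x. x \<in> carrier G - Gstar G s}"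

inductive_set Sspan :: "('g, 'b) monoid_scheme \<Rightarrow> ('g \<Rightarrow> 'g) \<Rightarrow> ('g \<Rightarrow> 'r::comm_ring_1) \<Rightarrow> ('g \<Rightarrow> 'r) set"
  for G s \<sigma> where
  zero: "(\<lambda>z. 0) \<in> Sspan G s \<sigma>"
| gen: "a \<in> Sgens G s \<sigma> \<Longrightarrow> a \<in> Sspan G s \<sigma>"
| add: "a \<in> Sspan G s \<sigma> \<Longrightarrow> b \<in> Sspan G s \<sigma> \<Longrightarrow> (\<lambda>z. a z + b z) \<in> Sspan G s \<sigma>"
| smult: "a \<in> Sspan G s \<sigma> \<Longrightarrow> (\<lambda>z. r * a z) \<in> Sspan G s \<sigma>"

definition anticommutative :: "('g, 'b) monoid_scheme \<Rightarrow> ('g \<Rightarrow> 'r::comm_ring_1) set \<Rightarrow> bool" where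
  "anticommutative G S \<longleftrightarrow> (\<forall>a\<in>S. \<forall>b\<in>S. (\<lambda>z. grmult G a b z + grmult G b a z) = (\<lambda>z. 0))"

end

theory Submission
  imports Defs
begin

lemma grmult_finite:
  assumes "finite F" "F \<subseteq> carrier G" "\<And>y. a y \<noteq> 0 \<Longrightarrow> y \<in> F" "z \<in> carrier G"
  shows "grmult G a b z = (\<Sum>y\<in>F. a y * b (inv\<^bsub>G\<^esub> y \<otimes>\<^bsub>G\<^esub> z))"
proof -
  have "(\<Sum>y\<in>{y \<in> carrier G. a y \<noteq> 0}. a y * b (inv\<^bsub>G\<^esub> y \<otimes>\<^bsub>G\<^esub> z))
      = (\<Sum>y\<in>F. a y * b (inv\<^bsub>G\<^esub> y \<otimes>\<^bsub>G\<^esub> z))"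
    by (rule sum.mono_neutral_left) (use assms in auto)
  then show ?thesis using assms(4) by (simp add: grmult_def)
qed

lemma grmult_pair:
  assumes "x \<in> carrier G" "y \<in> carrier G" "x \<noteq> y" "z \<in> carrier G"
  shows "grmult G (\<lambda>w. grbasis G x w + c * grbasis G y w) b z
     = b (inv\<^bsub>G\<^esub> x \<otimes>\<^bsub>G\<^esub> z) + c * b (inv\<^bsub>G\<^esub> y \<otimes>\<^bsub>G\<^esub> z)"
proof -
  have "grmult G (\<lambda>w. grbasis G x w + c * grbasis G y w) b z
     = (\<Sum>w\<in>{x,y}. (grbasis G x w + c * grbasis G y w) * b (inv\<^bsub>G\<^esub> w \<otimes>\<^bsub>G\<^esub> z))"
    by (rule grmult_finite) (use assms in \<open>auto simp: grbasis_def split: if_splits\<close>)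
  also have "\<dots> = b (inv\<^bsub>G\<^esub> x \<otimes>\<^bsub>G\<^esub> z) + c * b (inv\<^bsub>G\<^esub> y \<otimes>\<^bsub>G\<^esub> z)"
    using assms(3) by (simp add: grbasis_def)
  finally show ?thesis .
qed

lemma grmult_one:
  fixes G (structure)
  assumes "group G" "z \<in> carrier G"
  shows "grmult G (\<lambda>w. c * grbasis G \<one>\<^bsub>G\<^esub> w) b z = c * b z"
proof -
  interpret group G by fact
  have "grmult G (\<lambda>w. c * grbasis G \<one> w) b z
     = (\<Sum>w\<in>{\<one>}. (c * grbasis G \<one> w) * b (inv w \<otimes> z))"
    by (rule grmult_finite) (use assms in \<open>auto simp: grbasis_def split: if_splits\<close>)
  then show ?thesis using assms by (simp add: grbasis_def)
qed

lemma lemma3p3_aux: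
  fixes G :: "('g, 'b) monoid_scheme" (structure) and s :: "'g \<Rightarrow> 'g" and \<sigma> :: "'g \<Rightarrow> 'r::comm_ring_1"
  assumes "group G"
    and "CHAR('r) \<noteq> 2"
    and "group_involution G s"
    and "\<forall>x\<in>carrier G. \<sigma> x dvd 1"
    and "\<forall>x\<in>carrier G. \<forall>y\<in>carrier G. \<sigma> (x \<otimes>\<^bsub>G\<^esub> y) = \<sigma> x * \<sigma> y"
    and "\<exists>x\<in>carrier G. \<sigma> x \<noteq> 1"
    and "\<forall>x\<in>carrier G. x \<otimes>\<^bsub>G\<^esub> s x \<in> kerN G \<sigma>"
    and "anticommutative G (Sspan G s \<sigma>)"
    and "\<exists>x\<in>carrier G. s x \<noteq> x"
  shows "CHAR('r) = 4 \<and>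
    (\<forall>x\<in>carrier G - Gstar G s.
       x \<otimes>\<^bsub>G\<^esub> s x = s x \<otimes>\<^bsub>G\<^esub> x \<and> x \<otimes>\<^bsub>G\<^esub> x \<in> Gstar G s)"
proof -
  interpret group G by fact
  have sc: "\<And>x. x \<in> carrier G \<Longrightarrow> s x \<in> carrier G" and ss: "\<And>x. x \<in> carrier G \<Longrightarrow> s (s x) = x"
    and smul: "\<And>x y. x \<in> carrier G \<Longrightarrow> y \<in> carrier G \<Longrightarrow> s (x \<otimes> y) = s y \<otimes> s x"
    using assms(3) by (auto simp: group_involution_def)
  have s1: "s \<one> = \<one>"
  proof -
    have "s \<one> = s \<one> \<otimes> s \<one>" using smul[of \<one> \<one>] by simp
    then have "\<one> \<otimes> s \<one> = s \<one> \<otimes> s \<one>" using sc[of \<one>] by simp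
    then show ?thesis using sc[of \<one>] right_cancel by (metis one_closed)
  qed
  have sig1: "\<sigma> \<one> = 1"
  proof -
    obtain u where u: "1 = \<sigma> \<one> * u" using assms(4) by blast
    have "\<sigma> \<one> = \<sigma> \<one> * \<sigma> \<one>" using assms(5) by (metis one_closed r_one)
    then have "\<sigma> \<one> * u = \<sigma> \<one> * \<sigma> \<one> * u" by simp
    then show ?thesis using u by (simp add: mult.assoc)
  qed
  have ac: "\<And>a b z. a \<in> Sspan G s \<sigma> \<Longrightarrow> b \<in> Sspan G s \<sigma> \<Longrightarrow> grmult G a b z + grmult G b a z = 0"
    using assms(8) unfolding anticommutative_def by metis
  define A where "A x = (\<lambda>w. grbasis G x w + \<sigma> x * grbasis G (s x) w)" for x
  have AS: "A x \<in> Sspan G s \<sigma>" if "x \<in> carrier G" "s x \<noteq> x" for x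
    using that by (intro Sspan.gen) (auto simp: Sgens_def A_def Gstar_def)
  have BS: "(\<lambda>z. 2 * grbasis G \<one> z) \<in> Sspan G s \<sigma>"
    by (intro Sspan.gen) (auto simp: Sgens_def Gstar_def kerN_def s1 sig1)
  obtain x0 where x0: "x0 \<in> carrier G" "s x0 \<noteq> x0" using assms(9) by blast
  have four: "(4::'r) = 0"
  proof -
    have "grmult G (A x0) (\<lambda>z. 2 * grbasis G \<one> z) x0 + grmult G (\<lambda>z. 2 * grbasis G \<one> z) (A x0) x0 = 0"
      using ac[OF AS[OF x0] BS] .
    moreover have "grmult G (\<lambda>z. 2 * grbasis G \<one> z) (A x0) x0 = 2 * A x0 x0"
      by (rule grmult_one[OF assms(1) x0(1)])
    moreover have "grmult G (A x0) (\<lambda>z. 2 * grbasis G \<one> z) x0 = 2"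
    proof -
      have "inv (s x0) \<otimes> x0 \<noteq> \<one>"
        using x0 sc[of x0] by (metis inv_solve_left' one_closed r_one)
      then show ?thesis unfolding A_def
        using grmult_pair[OF x0(1) sc[OF x0(1)] x0(2)[symmetric] x0(1), where c="\<sigma> x0" and b="\<lambda>z. 2 * grbasis G \<one> z"] x0
        by (simp add: grbasis_def)
    qed
    moreover have "A x0 x0 = 1" using x0 by (simp add: A_def grbasis_def)
    ultimately show ?thesis by simp
  qed
  have one_ne: "(1::'r) \<noteq> 0"
  proof
    assume "(1::'r) = 0"
    then have "\<And>r::'r. r = 0" by (metis mult_1 mult_zero_left)
    then show False using assms(6) by (metis (full_types))
  qed
  have char4: "CHAR('r) = 4"
  proof -
    have "of_nat 4 = (0::'r)" using four by simp
    then have d: "CHAR('r) dvd 4" by (simp only: of_nat_eq_0_iff_char_dvd)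
    have "CHAR('r) \<noteq> 1" using one_ne by (metis of_nat_1 of_nat_eq_0_iff_char_dvd dvd_refl)
    moreover have "CHAR('r) \<le> 4" using d by (intro dvd_imp_le) simp_all
    moreover have "CHAR('r) \<noteq> 3" proof assume "CHAR('r) = 3" with d show False by simp qed
    moreover have "CHAR('r) \<noteq> 0" proof assume "CHAR('r) = 0" with d show False by simp qed
    ultimately show ?thesis using assms(2) by linarith
  qed
  have two_ne: "(2::'r) \<noteq> 0"
  proof
    assume "(2::'r) = 0"
    then have "of_nat 2 = (0::'r)" by simp
    then have "CHAR('r) dvd 2" by (simp only: of_nat_eq_0_iff_char_dvd)
    then show False using char4 by simp
  qed
  have two_unit: "2 * c \<noteq> (0::'r)" if cu: "c dvd 1" for c
  proof
    assume h: "2 * c = 0"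
    obtain u where "1 = c * u" using cu by (elim dvdE)
    then have "2 = 2 * c * u" by (simp add: mult.assoc)
    then show False using h two_ne by simp
  qed
  have part2: "x \<otimes> s x = s x \<otimes> x \<and> x \<otimes> x \<in> Gstar G s" if x: "x \<in> carrier G" "s x \<noteq> x" for x
  proof -
    have sx: "s x \<in> carrier G" using sc x by blast
    have sq: "2 * grmult G (A x) (A x) z = 0" for z
      using ac[OF AS[OF x] AS[OF x], of z] by simp
    have gm: "grmult G (A x) (A x) z = A x (inv x \<otimes> z) + \<sigma> x * A x (inv (s x) \<otimes> z)" if "z \<in> carrier G" for z
      unfolding A_def using grmult_pair[OF x(1) sx x(2)[symmetric] that, where c="\<sigma> x" and b="A x"] by (simp add: A_def)
    have Av: "A x w = (if w = x then 1 else 0) + \<sigma> x * (if w = s x then 1 else 0)" for w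
      by (simp add: A_def grbasis_def)
    have xsq: "x \<otimes> x = s x \<otimes> s x"
    proof (rule ccontr)
      assume ne: "x \<otimes> x \<noteq> s x \<otimes> s x"
      have e1: "inv x \<otimes> (x \<otimes> x) = x" using x by (simp add: m_assoc[symmetric])
      have e2: "inv (s x) \<otimes> (x \<otimes> x) \<noteq> x" using x sx by (simp add: inv_solve_left')
      have e3: "inv (s x) \<otimes> (x \<otimes> x) \<noteq> s x" using x sx ne by (simp add: inv_solve_left')
      have "grmult G (A x) (A x) (x \<otimes> x) = 1"
        using gm[of "x \<otimes> x"] x e1 e2 e3 by (simp add: Av)
      then show False using sq[of "x \<otimes> x"] two_ne by simp
    qed
    have comm: "x \<otimes> s x = s x \<otimes> x"
    proof (rule ccontr)
      assume ne: "x \<otimes> s x \<noteq> s x \<otimes> x"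
      have e1: "inv x \<otimes> (x \<otimes> s x) = s x" using x sx by (simp add: m_assoc[symmetric])
      have e2: "inv (s x) \<otimes> (x \<otimes> s x) \<noteq> x" using x sx ne by (simp add: inv_solve_left')
      have e3: "inv (s x) \<otimes> (x \<otimes> s x) \<noteq> s x" using x sx by (simp add: inv_solve_left')
      have "grmult G (A x) (A x) (x \<otimes> s x) = \<sigma> x"
        using gm[of "x \<otimes> s x"] x sx e1 e2 e3 by (simp add: Av)
      then show False using sq[of "x \<otimes> s x"] two_unit assms(4) x by simp
    qed
    have "s (x \<otimes> x) = x \<otimes> x" using smul[OF x(1) x(1)] xsq by simp
    then show ?thesis using comm x by (simp add: Gstar_def)
  qed
  show ?thesis using char4 part2 by (auto simp: Gstar_def)
qed

theorem lemma3p3: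
  fixes G :: "('g, 'b) monoid_scheme" and s :: "'g \<Rightarrow> 'g" and \<sigma> :: "'g \<Rightarrow> 'r::comm_ring_1"
  assumes "group G"
    and "CHAR('r) \<noteq> 2"
    and "group_involution G s"
    and "\<forall>x\<in>carrier G. \<sigma> x dvd 1"
    and "\<forall>x\<in>carrier G. \<forall>y\<in>carrier G. \<sigma> (x \<otimes>\<^bsub>G\<^esub> y) = \<sigma> x * \<sigma> y"
    and "\<exists>x\<in>carrier G. \<sigma> x \<noteq> 1"
    and "\<forall>x\<in>carrier G. x \<otimes>\<^bsub>G\<^esub> s x \<in> kerN G \<sigma>"
    and "anticommutative G (Sspan G s \<sigma>)"
    and "\<exists>x\<in>carrier G. s x \<noteq> x"
  shows "CHAR('r) = 4 \<and>
    (\<forall>x\<in>carrier G - Gstar G s.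
       x \<otimes>\<^bsub>G\<^esub> s x = s x \<otimes>\<^bsub>G\<^esub> x \<and> x \<otimes>\<^bsub>G\<^esub> x \<in> Gstar G s)"
  using assms by (rule lemma3p3_aux)

end
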